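(* Let $\mathcal{A}^+=\{\mathcal{A}_1,\dots,\mathcal{A}_v\}$ be a finite collection and let $F:\mathcal{A}^+\to\mathbb{R}_{\ge 0}$ satisfy $c:=\sum_{u=1}^v F(\mathcal{A}_u)>0$. Let $\mathcal{A}^*\in\arg\max_{\mathcal{A}\in\mathcal{A}^+}F(\mathcal{A})$. Let $r$ be a positive integer with $r\ge \frac{c}{F(\mathcal{A}^* )}-1$. Form $\mathcal{R}$ as the set of elements obtained by $r$ independent draws from $\mathcal{A}^+$, each with distribution $\Pr(\mathcal{A})=\frac{1}{c}F(\mathcal{A})$. Let $\mathcal{A}'\in\arg\max_{\mathcal{A}\in\mathcal{R}}F(\mathcal{A})$. Then $$F(\mathcal{A}^* )-\mathbb{E}[F(\mathcal{A}')]\le\Bigl(\frac{r}{1+r}\Bigr)^{r}F(\mathcal{A}^* ).$$ *)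

theory Defs
  imports "HOL-Probability.Probability"
begin

definition weighted_pmf :: "'a set \<Rightarrow> ('a \<Rightarrow> real) \<Rightarrow> 'a pmf" where
  "weighted_pmf S F = embed_pmf (\<lambda>x. if x \<in> S then F x / sum F S else 0)"

end

theory Submission
  imports Defs "HOL-Probability.Product_PMF"
begin

lemma prob_product_gen:
  "measure_pmf.prob (pair_pmf M N) (A \<times> B) = measure_pmf.prob M A * measure_pmf.prob N B"
proof -
  have "measure_pmf.prob (pair_pmf M N) (A \<times> B)
      = measure_pmf.prob (pair_pmf M N) ((A \<times> B) \<inter> set_pmf (pair_pmf M N))"
    by (rule measure_Int_set_pmf[symmetric])
  also have "(A \<times> B) \<inter> set_pmf (pair_pmf M N) = (A \<inter> set_pmf M) \<times> (B \<inter> set_pmf N)"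
    by auto
  also have "measure_pmf.prob (pair_pmf M N) \<dots> = measure_pmf.prob M (A \<inter> set_pmf M) * measure_pmf.prob N (B \<inter> set_pmf N)"
    by (rule measure_pmf_prob_product) auto
  finally show ?thesis by (simp add: measure_Int_set_pmf)
qed

lemma rep_not_in:
  "measure_pmf.prob (replicate_pmf n p) {xs. a \<notin> set xs} = (1 - pmf p a)^n"
proof (induction n)
  case 0
  then show ?case by simp
next
  case (Suc n)
  have eq: "replicate_pmf (Suc n) p = map_pmf (\<lambda>(x,xs). x#xs) (pair_pmf p (replicate_pmf n p))"
    by (simp add: pair_pmf_def map_bind_pmf map_return_pmf)
  have pre: "(\<lambda>(x,xs). x#xs) -` {xs. a \<notin> set xs} = {x. x \<noteq> a} \<times> {xs. a \<notin> set xs}"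
    by auto
  have c: "measure_pmf.prob p {x. x \<noteq> a} = 1 - pmf p a"
  proof -
    have "{x. x \<noteq> a} = space (measure_pmf p) - {a}" by auto
    then show ?thesis using measure_pmf.prob_compl[of "{a}" p]
      by (simp add: measure_pmf_single)
  qed
  show ?case
    unfolding eq measure_map_pmf pre by (simp add: prob_product_gen c Suc)
qed

lemma pmf_weighted:
  assumes "finite S" "\<forall>A\<in>S. F A \<ge> 0" "sum F S > 0"
  shows "pmf (weighted_pmf S F) x = (if x \<in> S then F x / sum F S else 0)"
  unfolding weighted_pmf_def
proof (rule pmf_embed_pmf)
  show "\<And>x. 0 \<le> (if x \<in> S then F x / sum F S else 0)" using assms by auto
  have "(\<integral>\<^sup>+x. ennreal (if x \<in> S then F x / sum F S else 0) \<partial>count_space UNIV)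
      = (\<Sum>x\<in>S. ennreal (if x \<in> S then F x / sum F S else 0))"
    by (rule nn_integral_count_space') (use assms in auto)
  also have "\<dots> = ennreal (\<Sum>x\<in>S. F x / sum F S)"
    using assms by (subst sum_ennreal) auto
  also have "(\<Sum>x\<in>S. F x / sum F S) = 1"
    using assms by (simp add: sum_divide_distrib[symmetric])
  finally show "(\<integral>\<^sup>+x. ennreal (if x \<in> S then F x / sum F S else 0) \<partial>count_space UNIV) = 1"
    by simp
qed

theorem theorem4:
  fixes S :: "'a set" and F :: "'a \<Rightarrow> real" and Astar :: 'a and r :: nat
  assumes "finite S"
    and "\<forall>A\<in>S. F A \<ge> 0"
    and "sum F S > 0"
    and "Astar \<in> S" and "\<forall>A\<in>S. F A \<le> F Astar"
    and "r > 0"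
    and "real r \<ge> sum F S / F Astar - 1"
  shows "F Astar - measure_pmf.expectation (replicate_pmf r (weighted_pmf S F))
             (\<lambda>xs. Max (F ` set xs))
         \<le> (real r / (1 + real r)) ^ r * F Astar"
proof -
  define c where "c = sum F S"
  define M where "M = F Astar"
  define q where "q = weighted_pmf S F"
  define R where "R = replicate_pmf r q"
  define p where "p = M / c"
  have cpos: "c > 0" using assms(3) c_def by simp
  have Mpos: "M > 0"
  proof (rule ccontr)
    assume "\<not> M > 0"
    then have "\<forall>A\<in>S. F A = 0" using assms(2,5) M_def by force
    then have "sum F S = 0" by simp
    then show False using assms(3) by simp
  qed
  have Mc: "M \<le> c" unfolding M_def c_def
    by (rule member_le_sum) (use assms in auto)
  have pq: "pmf q Astar = p" unfolding q_def p_def M_def c_def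
    using pmf_weighted[OF assms(1-3)] assms(4) by simp
  have setq: "set_pmf q \<subseteq> S"
    unfolding q_def using pmf_weighted[OF assms(1-3)] by (auto simp: set_pmf_eq)
  have setR: "set_pmf R = {xs\<in>lists (set_pmf q). length xs = r}"
    unfolding R_def by (rule set_replicate_pmf)
  have finR: "finite (set_pmf R)"
  proof -
    have "finite (set_pmf q)" using setq assms(1) finite_subset by blast
    then have "finite {xs. set xs \<subseteq> set_pmf q \<and> length xs = r}" by (rule finite_lists_length_eq)
    moreover have "{xs\<in>lists (set_pmf q). length xs = r} = {xs. set xs \<subseteq> set_pmf q \<and> length xs = r}"
      by auto
    ultimately show ?thesis unfolding setR by simp
  qed
  let ?E = "{xs. Astar \<in> set xs}"
  have int1: "integrable R (\<lambda>xs. Max (F ` set xs))"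
    using finR by (rule integrable_measure_pmf_finite)
  have int2: "integrable R (\<lambda>xs. M * indicator ?E xs)"
    using finR by (rule integrable_measure_pmf_finite)
  have ae: "AE xs in R. M * indicator ?E xs \<le> Max (F ` set xs)"
  proof (rule AE_pmfI)
    fix xs assume xs: "xs \<in> set_pmf R"
    then have sub: "set xs \<subseteq> S" and len: "length xs = r" using setR setq by auto
    have ne: "set xs \<noteq> {}" using len assms(6) by auto
    show "M * indicator ?E xs \<le> Max (F ` set xs)"
    proof (cases "Astar \<in> set xs")
      case True
      then show ?thesis using M_def by (simp add: Max_ge)
    next
      case False
      obtain y where y: "y \<in> set xs" using ne by (metis ex_in_conv)
      have "F y \<le> Max (F ` set xs)" using y by (simp add: Max_ge)
      moreover have "F y \<ge> 0" using y sub assms(2) by auto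
      ultimately show ?thesis using False by simp
    qed
  qed
  have "measure_pmf.expectation R (\<lambda>xs. M * indicator ?E xs) \<le> measure_pmf.expectation R (\<lambda>xs. Max (F ` set xs))"
    by (rule integral_mono_AE[OF int2 int1 ae])
  moreover have "measure_pmf.expectation R (\<lambda>xs. M * indicator ?E xs) = M * measure_pmf.prob R ?E"
    by simp
  moreover have "measure_pmf.prob R ?E = 1 - (1 - p)^r"
  proof -
    have "measure_pmf.prob R ?E = 1 - measure_pmf.prob R {xs. Astar \<notin> set xs}"
      using measure_pmf.prob_compl[of "{xs. Astar \<notin> set xs}" R]
      by (simp add: Compl_eq_Diff_UNIV[symmetric] Collect_neg_eq[symmetric])
    then show ?thesis unfolding R_def using rep_not_in[of r q Astar] pq by simp
  qed
  ultimately have lb: "M * (1 - (1 - p)^r) \<le> measure_pmf.expectation R (\<lambda>xs. Max (F ` set xs))"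
    by simp
  have p1: "0 \<le> 1 - p" using Mc cpos unfolding p_def by (simp add: field_simps)
  have p2: "1 - p \<le> real r / (1 + real r)"
  proof -
    have "c / M \<le> real r + 1" using assms(7) unfolding c_def M_def by simp
    then have "c \<le> (real r + 1) * M" using Mpos by (simp add: field_simps)
    then show ?thesis unfolding p_def using Mpos cpos by (simp add: field_simps)
  qed
  have "(1 - p)^r \<le> (real r / (1 + real r))^r" by (rule power_mono[OF p2 p1])
  then have "M * (1-p)^r \<le> (real r / (1 + real r))^r * M" using Mpos by simp
  then show ?thesis using lb unfolding M_def[symmetric] R_def q_def[symmetric]
    by (simp add: algebra_simps)
qed

end
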